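(* Let $\{\boldsymbol y^{MSLP}_n\}_{n\in\mathcal T}$, $\{u^{MSLP}_n\}_{n\in\mathcal T\setminus\{1\}}$ be the values of the $\boldsymbol y$- and $u$-variables in an optimal solution of the linear programming relaxation of the multistage model (integrality of $\boldsymbol x$ dropped). Define $\boldsymbol x^{MS}_1=\boldsymbol B_{t_1}\boldsymbol y^{MSLP}_1$, $\boldsymbol x^{MS}_n=\max_{m\in\mathcal P(n)}\boldsymbol B_{t_m}\boldsymbol y^{MSLP}_m-\max_{m\in\mathcal P(a(n))}\boldsymbol B_{t_m}\boldsymbol y^{MSLP}_m$ ($n\ne1$), $\eta^{MS}_n=\max_{m\in\mathcal C(n)}\{\boldsymbol f_{t_m}^{\mathsf T}\sum_{l\in\mathcal P(m)}\boldsymbol x^{MS}_l+\boldsymbol c_{t_m}^{\mathsf T}\boldsymbol y^{MSLP}_m-u^{MSLP}_m\}$ ($n\notin\mathcal L$), $\boldsymbol x^{TS}_1=\lceil\boldsymbol B_{t_1}\boldsymbol y^{MSLP}_1\rceil$, $\boldsymbol x^{TS}_n=\max_{m\in\mathcal P(n)}\lceil\max_{l\in\mathcal T_{t_m}}\boldsymbol B_{t_l}\boldsymbol y^{MSLP}_l\rceil-\max_{m\in\mathcal P(a(n))}\lceil\max_{l\in\mathcal T_{t_m}}\boldsymbol B_{t_l}\boldsymbol y^{MSLP}_l\rceil$ ($n\ne1$), $\eta^{TS}_n=\max_{m\in\mathcal C(n)}\{\boldsymbol f_{t_m}^{\mathsf T}\sum_{l\in\mathcal P(m)}\boldsymbol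 x^{TS}_l+\boldsymbol c_{t_m}^{\mathsf T}\boldsymbol y^{MSLP}_m-u^{MSLP}_m\}$ ($n\notin\mathcal L$). Then $$\mathrm{VMS}_R\le\mathrm{VMS}_R^{UB}:=\boldsymbol f_{t_1}^{\mathsf T}\big(\lceil\boldsymbol B_{t_1}\boldsymbol y^{MSLP}_1\rceil-\boldsymbol B_{t_1}\boldsymbol y^{MSLP}_1\big)+\sum_{n\in\mathcal T\setminus\{1\}}p_n(1-\lambda_{t_n})\boldsymbol f_{t_n}^{\mathsf T}\Big(\max_{m\in\mathcal P(n)}\big\lceil\max_{l\in\mathcal T_{t_m}}\boldsymbol B_{t_l}\boldsymbol y^{MSLP}_l\big\rceil-\max_{m\in\mathcal P(n)}\boldsymbol B_{t_m}\boldsymbol y^{MSLP}_m\Big)+\sum_{n\in\mathcal T\setminus\mathcal L}p_n\lambda_{t_n+1}\big(\eta^{TS}_n-\eta^{MS}_n\big).$$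
   Context: Setting. Fix integers $T\ge 2$ (periods), $M\ge1$ (facilities), $N\ge1$ (customer sites). For each period $t$: maintenance costs $f_{ti}\ge 0$ forming $\boldsymbol f_t\in\mathbb R^M$; operational costs $c_{tij}\ge0$ forming $\boldsymbol c_t\in\mathbb R^{MN}$; capacities $h_{ti}>0$. Vectors $\boldsymbol y\in\mathbb R^{MN}$ are indexed by pairs $(i,j)$; $(\boldsymbol A_t\boldsymbol y)_j=\sum_{i=1}^M y_{ij}$ defines $\boldsymbol A_t$ and $(\boldsymbol B_t\boldsymbol y)_i=\frac1{h_{ti}}\sum_{j=1}^N y_{ij}$ defines $\boldsymbol B_t$. Ceilings and maxima of vectors are componentwise. Scenario tree: a finite rooted tree with node set $\mathcal T$, root $1$, all root-to-leaf paths having $T$ nodes; $\mathcal T_t$ nodes at depth $t$, $t_n$ the period of $n$, $\mathcal L=\mathcal T_T$ the leaves, $a(n)$ the parent of $n\ne1$, $\mathcal C(n)$ the children of $n$, $\mathcal P(n)$ the nodes on the root-to-$n$ path (inclusive). Probabilities $p_n>0$ with $\sum_{n\in\mathcal T_t}p_n=1$ and $\sum_{m\in\mathcal C(n)}p_m=p_n$ ($n\notin\mathcal L$); demands $\boldsymbol d_n\in\mathbb R^N_{\ge0}$. Risk parameters $\lambda_t\in[0,1]$, $\alpha_t\in(0,1)$, $t=2,\ldots,T$. $\tilde{\boldsymbol f}_n=\boldsymbol f_{t_n}$ if $n=1$, else $(1-\lambda_{t_n})\boldsymbol f_{t_n}$; $\tilde{\boldsymbol c}_n=\boldsymbol c_{t_n}$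 if $n=1$, else $(1-\lambda_{t_n})\boldsymbol c_{t_n}$; $\tilde\lambda_n=0$ if $n\in\mathcal L$, else $\lambda_{t_n+1}$; $\tilde\alpha_n=0$ if $n=1$, else $\lambda_{t_n}/(1-\alpha_{t_n})$. Multistage model: $z^{MS}_R=\min\sum_{n\in\mathcal T}p_n\big(\tilde{\boldsymbol f}_n^{\mathsf T}\sum_{m\in\mathcal P(n)}\boldsymbol x_m+\tilde{\boldsymbol c}_n^{\mathsf T}\boldsymbol y_n+\tilde\lambda_n\eta_n+\tilde\alpha_nu_n\big)$ over $\boldsymbol x_n\in\mathbb Z^M_+$, $\boldsymbol y_n\in\mathbb R^{MN}_+$ ($n\in\mathcal T$), $\eta_n\in\mathbb R$ ($n\notin\mathcal L$), $u_n\ge0$ ($n\ne1$), subject to $\boldsymbol A_{t_n}\boldsymbol y_n=\boldsymbol d_n$, $\boldsymbol B_{t_n}\boldsymbol y_n\le\sum_{m\in\mathcal P(n)}\boldsymbol x_m$ ($n\in\mathcal T$) and $u_n+\eta_{a(n)}\ge\boldsymbol f_{t_n}^{\mathsf T}\sum_{m\in\mathcal P(n)}\boldsymbol x_m+\boldsymbol c_{t_n}^{\mathsf T}\boldsymbol y_n$ ($n\ne1$). Two-stage model: the multistage model plus the constraints $\boldsymbol x_m=\boldsymbol x_n$ for all $m,n\in\mathcal T_t$, $t=1,\ldots,T$; optimal value $z^{TS}_R$. $\mathrm{VMS}_R:=z^{TS}_R-z^{MS}_R$. *)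

theory Defs
  imports Complex_Main
begin

text \<open>An instance of the risk-averse multistage facility location problem.
 Periods are 1..T, facilities are indexed by i < M, customer sites by j < N.
 fc t i = f_{ti}, cc t i j = c_{tij}, cap t i = h_{ti}, lam t = lambda_t, alp t = alpha_t.\<close>

record 'v inst =
  nodes :: "'v set"
  root :: 'v
  par :: "'v \<Rightarrow> 'v"
  per :: "'v \<Rightarrow> nat"
  T :: nat
  M :: nat
  N :: nat
  fc :: "nat \<Rightarrow> nat \<Rightarrow> real"
  cc :: "nat \<Rightarrow> nat \<Rightarrow> nat \<Rightarrow> real"
  cap :: "nat \<Rightarrow> nat \<Rightarrow> real"
  prob :: "'v \<Rightarrow> real"
  dem :: "'v \<Rightarrow> nat \<Rightarrow> real"
  lam :: "nat \<Rightarrow> real"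
  alp :: "nat \<Rightarrow> real"

definition Bv :: "'v inst \<Rightarrow> nat \<Rightarrow> (nat \<Rightarrow> nat \<Rightarrow> real) \<Rightarrow> nat \<Rightarrow> real" where
  "Bv D t y i = (1 / cap D t i) * (\<Sum>j<N D. y i j)"

definition Pth :: "'v inst \<Rightarrow> 'v \<Rightarrow> 'v set" where
  "Pth D n = {(par D ^^ k) n | k. k < per D n}"

definition Ch :: "'v inst \<Rightarrow> 'v \<Rightarrow> 'v set" where
  "Ch D n = {m \<in> nodes D. m \<noteq> root D \<and> par D m = n}"

definition Lev :: "'v inst \<Rightarrow> nat \<Rightarrow> 'v set" where
  "Lev D t = {n \<in> nodes D. per D n = t}"

definition Leaves :: "'v inst \<Rightarrow> 'v set" where
  "Leaves D = Lev D (T D)"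

definition scen_tree :: "'v inst \<Rightarrow> bool" where
  "scen_tree D \<longleftrightarrow> finite (nodes D) \<and> root D \<in> nodes D \<and> per D (root D) = 1 \<and>
     (\<forall>n\<in>nodes D. n \<noteq> root D \<longrightarrow> par D n \<in> nodes D \<and> per D n = per D (par D n) + 1) \<and>
     (\<forall>n\<in>nodes D. 1 \<le> per D n \<and> per D n \<le> T D) \<and>
     (\<forall>n\<in>nodes D. per D n < T D \<longrightarrow> Ch D n \<noteq> {})"

definition valid_inst :: "'v inst \<Rightarrow> bool" where
  "valid_inst D \<longleftrightarrow> scen_tree D \<and> T D \<ge> 2 \<and> M D \<ge> 1 \<and> N D \<ge> 1 \<and>
     (\<forall>t\<in>{1..T D}. \<forall>i<M D. fc D t i \<ge> 0 \<and> cap D t i > 0 \<and> (\<forall>j<N D. cc D t i j \<ge> 0)) \<and>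
     (\<forall>n\<in>nodes D. prob D n > 0) \<and>
     (\<forall>t\<in>{1..T D}. (\<Sum>n\<in>Lev D t. prob D n) = 1) \<and>
     (\<forall>n\<in>nodes D - Leaves D. (\<Sum>m\<in>Ch D n. prob D m) = prob D n) \<and>
     (\<forall>n\<in>nodes D. \<forall>j<N D. dem D n j \<ge> 0) \<and>
     (\<forall>t\<in>{2..T D}. 0 \<le> lam D t \<and> lam D t \<le> 1 \<and> 0 < alp D t \<and> alp D t < 1)"

text \<open>Coefficients: ftil_n = wgt n * f_{t_n}, ctil_n = wgt n * c_{t_n}\<close>
definition wgt :: "'v inst \<Rightarrow> 'v \<Rightarrow> real" where
  "wgt D n = (if n = root D then 1 else 1 - lam D (per D n))"

definition lamt :: "'v inst \<Rightarrow> 'v \<Rightarrow> real" where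
  "lamt D n = (if n \<in> Leaves D then 0 else lam D (per D n + 1))"

definition alpt :: "'v inst \<Rightarrow> 'v \<Rightarrow> real" where
  "alpt D n = (if n = root D then 0 else lam D (per D n) / (1 - alp D (per D n)))"

definition stage_cost :: "'v inst \<Rightarrow> ('v \<Rightarrow> nat \<Rightarrow> real) \<Rightarrow> ('v \<Rightarrow> nat \<Rightarrow> nat \<Rightarrow> real) \<Rightarrow> 'v \<Rightarrow> real" where
  "stage_cost D x y n = (\<Sum>i<M D. fc D (per D n) i * (\<Sum>m\<in>Pth D n. x m i))
     + (\<Sum>i<M D. \<Sum>j<N D. cc D (per D n) i j * y n i j)"

definition obj :: "'v inst \<Rightarrow> ('v \<Rightarrow> nat \<Rightarrow> real) \<Rightarrow> ('v \<Rightarrow> nat \<Rightarrow> nat \<Rightarrow> real)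
     \<Rightarrow> ('v \<Rightarrow> real) \<Rightarrow> ('v \<Rightarrow> real) \<Rightarrow> real" where
  "obj D x y eta u = (\<Sum>n\<in>nodes D. prob D n *
     (wgt D n * stage_cost D x y n + lamt D n * eta n + alpt D n * u n))"

text \<open>Feasibility: integral = integrality of x; ts = two-stage (nonanticipativity per period)\<close>
definition feasible :: "'v inst \<Rightarrow> bool \<Rightarrow> bool \<Rightarrow> ('v \<Rightarrow> nat \<Rightarrow> real) \<Rightarrow> ('v \<Rightarrow> nat \<Rightarrow> nat \<Rightarrow> real)
     \<Rightarrow> ('v \<Rightarrow> real) \<Rightarrow> ('v \<Rightarrow> real) \<Rightarrow> bool" where
  "feasible D integral ts x y eta u \<longleftrightarrow>
     (\<forall>n\<in>nodes D. \<forall>i<M D. x n i \<ge> 0 \<and> (integral \<longrightarrow> x n i \<in> \<int>)) \<and>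
     (\<forall>n\<in>nodes D. \<forall>i<M D. \<forall>j<N D. y n i j \<ge> 0) \<and>
     (\<forall>n\<in>nodes D - {root D}. u n \<ge> 0) \<and>
     (\<forall>n\<in>nodes D. \<forall>j<N D. (\<Sum>i<M D. y n i j) = dem D n j) \<and>
     (\<forall>n\<in>nodes D. \<forall>i<M D. Bv D (per D n) (y n) i \<le> (\<Sum>m\<in>Pth D n. x m i)) \<and>
     (\<forall>n\<in>nodes D - {root D}. u n + eta (par D n) \<ge> stage_cost D x y n) \<and>
     (ts \<longrightarrow> (\<forall>t\<in>{1..T D}. \<forall>m\<in>Lev D t. \<forall>n\<in>Lev D t. \<forall>i<M D. x m i = x n i))"

definition zMS :: "'v inst \<Rightarrow> real" where
  "zMS D = Inf {obj D x y eta u | x y eta u. feasible D True False x y eta u}"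

definition zTS :: "'v inst \<Rightarrow> real" where
  "zTS D = Inf {obj D x y eta u | x y eta u. feasible D True True x y eta u}"

definition VMS :: "'v inst \<Rightarrow> real" where
  "VMS D = zTS D - zMS D"

definition mxB :: "'v inst \<Rightarrow> ('v \<Rightarrow> nat \<Rightarrow> nat \<Rightarrow> real) \<Rightarrow> 'v \<Rightarrow> nat \<Rightarrow> real" where
  "mxB D y n i = Max ((\<lambda>m. Bv D (per D m) (y m) i) ` Pth D n)"

definition mxC :: "'v inst \<Rightarrow> ('v \<Rightarrow> nat \<Rightarrow> nat \<Rightarrow> real) \<Rightarrow> 'v \<Rightarrow> nat \<Rightarrow> real" where
  "mxC D y n i = Max ((\<lambda>m. real_of_int \<lceil>Max ((\<lambda>l. Bv D (per D l) (y l) i) ` Lev D (per D m))\<rceil>) ` Pth D n)"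

definition xMS :: "'v inst \<Rightarrow> ('v \<Rightarrow> nat \<Rightarrow> nat \<Rightarrow> real) \<Rightarrow> 'v \<Rightarrow> nat \<Rightarrow> real" where
  "xMS D y n i = (if n = root D then Bv D (per D n) (y n) i else mxB D y n i - mxB D y (par D n) i)"

definition xTS :: "'v inst \<Rightarrow> ('v \<Rightarrow> nat \<Rightarrow> nat \<Rightarrow> real) \<Rightarrow> 'v \<Rightarrow> nat \<Rightarrow> real" where
  "xTS D y n i = (if n = root D then real_of_int \<lceil>Bv D (per D n) (y n) i\<rceil>
                  else mxC D y n i - mxC D y (par D n) i)"

definition eta_of :: "'v inst \<Rightarrow> ('v \<Rightarrow> nat \<Rightarrow> real) \<Rightarrow> ('v \<Rightarrow> nat \<Rightarrow> nat \<Rightarrow> real) \<Rightarrow> ('v \<Rightarrow> real) \<Rightarrow> 'v \<Rightarrow> real" where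
  "eta_of D x y u n = Max ((\<lambda>m. stage_cost D x y m - u m) ` Ch D n)"

definition VMS_UB :: "'v inst \<Rightarrow> ('v \<Rightarrow> nat \<Rightarrow> nat \<Rightarrow> real) \<Rightarrow> ('v \<Rightarrow> real) \<Rightarrow> real" where
  "VMS_UB D y u =
     (\<Sum>i<M D. fc D (per D (root D)) i *
        (real_of_int \<lceil>Bv D (per D (root D)) (y (root D)) i\<rceil> - Bv D (per D (root D)) (y (root D)) i))
   + (\<Sum>n\<in>nodes D - {root D}. prob D n * (1 - lam D (per D n)) *
        (\<Sum>i<M D. fc D (per D n) i * (mxC D y n i - mxB D y n i)))
   + (\<Sum>n\<in>nodes D - Leaves D. prob D n * lam D (per D n + 1) *
        (eta_of D (xTS D y) y u n - eta_of D (xMS D y) y u n))"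

end

theory Submission
  imports Defs
begin

lemma par_pow:
  assumes st: "scen_tree D" and n: "n \<in> nodes D"
  shows "k < per D n \<Longrightarrow> (par D ^^ k) n \<in> nodes D \<and> per D ((par D ^^ k) n) = per D n - k"
proof (induction k)
  case 0 then show ?case using n by simp
next
  case (Suc k)
  then have IH: "(par D ^^ k) n \<in> nodes D" "per D ((par D ^^ k) n) = per D n - k" by auto
  have "(par D ^^ k) n \<noteq> root D" using IH Suc.prems st unfolding scen_tree_def by auto
  then show ?case using IH st unfolding scen_tree_def by auto
qed

lemma Pth_img: "Pth D n = (\<lambda>k. (par D ^^ k) n) ` {..<per D n}"
  unfolding Pth_def by auto

lemma Pth_finite: "finite (Pth D n)" unfolding Pth_img by simp

lemma Pth_nodes: "scen_tree D \<Longrightarrow> n \<in> nodes D \<Longrightarrow> Pth D n \<subseteq> nodes D"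
  unfolding Pth_def using par_pow by fastforce

lemma per_pos: "scen_tree D \<Longrightarrow> n \<in> nodes D \<Longrightarrow> 1 \<le> per D n"
  unfolding scen_tree_def by auto

lemma Pth_self: "scen_tree D \<Longrightarrow> n \<in> nodes D \<Longrightarrow> n \<in> Pth D n"
  unfolding Pth_def using per_pos[of D n] by (auto intro!: exI[of _ 0])

lemma Pth_root: "scen_tree D \<Longrightarrow> Pth D (root D) = {root D}"
  unfolding Pth_def scen_tree_def by auto

lemma nonroot: "scen_tree D \<Longrightarrow> n \<in> nodes D \<Longrightarrow> n \<noteq> root D \<Longrightarrow>
   par D n \<in> nodes D \<and> per D n = per D (par D n) + 1"
  unfolding scen_tree_def by auto

lemma Pth_par: assumes st: "scen_tree D" and n: "n \<in> nodes D" "n \<noteq> root D"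
  shows "Pth D n = insert n (Pth D (par D n))"
proof -
  have e: "per D n = Suc (per D (par D n))" using nonroot[OF st n] by simp
  have "{(par D ^^ k) n | k. k < per D n} = insert n {(par D ^^ k) (par D n) | k. k < per D (par D n)}"
  proof (rule set_eqI, rule iffI)
    fix x assume "x \<in> {(par D ^^ k) n | k. k < per D n}"
    then obtain k where k: "x = (par D ^^ k) n" "k < per D n" by auto
    show "x \<in> insert n {(par D ^^ k) (par D n) | k. k < per D (par D n)}"
    proof (cases k)
      case 0 then show ?thesis using k by simp
    next
      case (Suc j) then show ?thesis using k e by (auto simp: funpow_Suc_right simp del: funpow.simps)
    qed
  next
    fix x assume "x \<in> insert n {(par D ^^ k) (par D n) | k. k < per D (par D n)}"
    then show "x \<in> {(par D ^^ k) n | k. k < per D n}"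
    proof
      assume "x = n" then show ?thesis using e by (auto intro!: exI[of _ 0])
    next
      assume "x \<in> {(par D ^^ k) (par D n) | k. k < per D (par D n)}"
      then obtain k where k: "x = (par D ^^ k) (par D n)" "k < per D (par D n)" by auto
      then show ?thesis using e
        by (auto intro!: exI[of _ "Suc k"] simp: funpow_Suc_right simp del: funpow.simps)
    qed
  qed
  then show ?thesis unfolding Pth_def .
qed

lemma Pth_per_less: assumes st: "scen_tree D" and n: "n \<in> nodes D" and m: "m \<in> Pth D n"
  shows "per D m \<le> per D n"
  using m par_pow[OF st n] unfolding Pth_def by auto

lemma notin_Pth_par: assumes st: "scen_tree D" and n: "n \<in> nodes D" "n \<noteq> root D"
  shows "n \<notin> Pth D (par D n)"
  using Pth_per_less[OF st, of "par D n" n] nonroot[OF st n] by auto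

lemma per_Pth: assumes st: "scen_tree D" and n: "n \<in> nodes D"
  shows "per D ` Pth D n = {1..per D n}"
proof -
  have "per D ` Pth D n = (\<lambda>k. per D n - k) ` {..<per D n}"
    unfolding Pth_img image_comp using par_pow[OF st n] by (auto simp: image_def)
  also have "\<dots> = {1..per D n}"
  proof (rule set_eqI, rule iffI)
    fix s assume "s \<in> {1..per D n}" then show "s \<in> (\<lambda>k. per D n - k) ` {..<per D n}"
      by (auto simp: image_def intro!: bexI[of _ "per D n - s"])
  qed auto
  finally show ?thesis .
qed

lemma Pth_mono: assumes st: "scen_tree D" and n: "n \<in> nodes D" and m: "m \<in> Pth D n"
  shows "Pth D m \<subseteq> Pth D n"
proof -
  obtain k where k: "m = (par D ^^ k) n" "k < per D n" using m unfolding Pth_def by auto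
  have "per D m = per D n - k" using par_pow[OF st n k(2)] k by simp
  show ?thesis
  proof
    fix z assume "z \<in> Pth D m"
    then obtain j where j: "z = (par D ^^ j) m" "j < per D m" unfolding Pth_def by auto
    have "z = (par D ^^ (j + k)) n" unfolding j(1) k(1) by (simp add: funpow_add)
    moreover have "j + k < per D n" using j(2) \<open>per D m = per D n - k\<close> k(2) by simp
    ultimately show "z \<in> Pth D n" unfolding Pth_def by blast
  qed
qed

lemma Lev1: assumes st: "scen_tree D" shows "Lev D 1 = {root D}"
proof -
  have "n = root D" if "n \<in> nodes D" "per D n = 1" for n
  proof (rule ccontr)
    assume "n \<noteq> root D"
    then have "per D n = per D (par D n) + 1" "par D n \<in> nodes D" using nonroot[OF st that(1)] by auto
    then show False using per_pos[OF st, of "par D n"] that(2) by simp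
  qed
  then show ?thesis using st unfolding Lev_def scen_tree_def by auto
qed

lemma telescope:
  assumes st: "scen_tree D"
    and r: "x (root D) = F (root D)"
    and s: "\<And>n. n \<in> nodes D \<Longrightarrow> n \<noteq> root D \<Longrightarrow> x n = F n - F (par D n)"
  shows "n \<in> nodes D \<Longrightarrow> (\<Sum>m\<in>Pth D n. x m) = (F n :: real)"
proof (induction "per D n" arbitrary: n)
  case 0 then show ?case using per_pos[OF st] by fastforce
next
  case (Suc k)
  show ?case
  proof (cases "n = root D")
    case True then show ?thesis using r Pth_root[OF st] by simp
  next
    case False
    have p: "par D n \<in> nodes D" "per D n = per D (par D n) + 1" using nonroot[OF st Suc.prems False] by auto
    have "(\<Sum>m\<in>Pth D n. x m) = x n + (\<Sum>m\<in>Pth D (par D n). x m)"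
      using Pth_par[OF st Suc.prems False] notin_Pth_par[OF st Suc.prems False] Pth_finite[of D "par D n"] by simp
    also have "\<dots> = x n + F (par D n)" using Suc.hyps(1)[of "par D n"] p Suc.hyps(2) by simp
    finally show ?thesis using s[OF Suc.prems False] by simp
  qed
qed


lemma fin_nodes: "scen_tree D \<Longrightarrow> finite (nodes D)"
  unfolding scen_tree_def by simp

lemma Lev_finite: "scen_tree D \<Longrightarrow> finite (Lev D t)"
  by (rule finite_subset[OF _ fin_nodes]) (auto simp: Lev_def)

lemma Ch_finite: "scen_tree D \<Longrightarrow> finite (Ch D t)"
  by (rule finite_subset[OF _ fin_nodes]) (auto simp: Ch_def)

lemma in_Ch_par: "n \<in> nodes D \<Longrightarrow> n \<noteq> root D \<Longrightarrow> n \<in> Ch D (par D n)"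
  unfolding Ch_def by auto

lemma mxC_per: assumes st: "scen_tree D" and n: "n \<in> nodes D"
  shows "mxC D y n i = Max ((\<lambda>s. real_of_int \<lceil>Max ((\<lambda>l. Bv D (per D l) (y l) i) ` Lev D s)\<rceil>) ` {1..per D n})"
proof -
  have "mxC D y n i = Max ((\<lambda>s. real_of_int \<lceil>Max ((\<lambda>l. Bv D (per D l) (y l) i) ` Lev D s)\<rceil>) ` (per D ` Pth D n))"
    unfolding mxC_def image_comp comp_def ..
  then show ?thesis unfolding per_Pth[OF st n] .
qed

lemma mxC_root: assumes st: "scen_tree D"
  shows "mxC D y (root D) i = real_of_int \<lceil>Bv D (per D (root D)) (y (root D)) i\<rceil>"
proof -
  have p: "per D (root D) = 1" using st unfolding scen_tree_def by simp
  show ?thesis unfolding mxC_def Pth_root[OF st] using p Lev1[OF st] by simp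
qed

lemma mxB_root: assumes st: "scen_tree D"
  shows "mxB D y (root D) i = Bv D (per D (root D)) (y (root D)) i"
  unfolding mxB_def Pth_root[OF st] by simp

lemma pathsum_TS: assumes st: "scen_tree D" and n: "n \<in> nodes D"
  shows "(\<Sum>m\<in>Pth D n. xTS D y m i) = mxC D y n i"
  by (rule telescope[of D "\<lambda>m. xTS D y m i" "\<lambda>m. mxC D y m i", OF st _ _ n])
     (simp_all add: xTS_def mxC_root[OF st])

lemma pathsum_MS: assumes st: "scen_tree D" and n: "n \<in> nodes D"
  shows "(\<Sum>m\<in>Pth D n. xMS D y m i) = mxB D y n i"
  by (rule telescope[of D "\<lambda>m. xMS D y m i" "\<lambda>m. mxB D y m i", OF st _ _ n])
     (simp_all add: xMS_def mxB_root[OF st])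

lemma Pth_ne: "scen_tree D \<Longrightarrow> n \<in> nodes D \<Longrightarrow> Pth D n \<noteq> {}"
  using Pth_self[of D n] by auto

lemma mxC_mono: assumes st: "scen_tree D" and n: "n \<in> nodes D" "n \<noteq> root D"
  shows "mxC D y (par D n) i \<le> mxC D y n i"
proof -
  have p: "par D n \<in> nodes D" using nonroot[OF st n] by auto
  have sub: "Pth D (par D n) \<subseteq> Pth D n" using Pth_par[OF st n] by blast
  show ?thesis unfolding mxC_def
    by (rule Max_mono) (simp_all add: image_mono[OF sub] Pth_ne[OF st p] Pth_finite)
qed

lemma mxC_int: assumes st: "scen_tree D" and n: "n \<in> nodes D"
  shows "mxC D y n i \<in> \<int>"
proof -
  have "mxC D y n i \<in> ((\<lambda>m. real_of_int \<lceil>Max ((\<lambda>l. Bv D (per D l) (y l) i) ` Lev D (per D m))\<rceil>) ` Pth D n)"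
    unfolding mxC_def by (rule Max_in) (simp_all add: Pth_ne[OF st n] Pth_finite)
  then obtain m where "mxC D y n i = real_of_int \<lceil>Max ((\<lambda>l. Bv D (per D l) (y l) i) ` Lev D (per D m))\<rceil>"
    by blast
  then show ?thesis by simp
qed

lemma Bv_le_mxC: assumes st: "scen_tree D" and n: "n \<in> nodes D"
  shows "Bv D (per D n) (y n) i \<le> mxC D y n i"
proof -
  have nl: "n \<in> Lev D (per D n)" using n by (simp add: Lev_def)
  have "Bv D (per D n) (y n) i \<le> Max ((\<lambda>l. Bv D (per D l) (y l) i) ` Lev D (per D n))"
    by (rule Max_ge) (simp_all add: Lev_finite[OF st] nl)
  also have "\<dots> \<le> real_of_int \<lceil>Max ((\<lambda>l. Bv D (per D l) (y l) i) ` Lev D (per D n))\<rceil>"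
    by (rule le_of_int_ceiling)
  also have "\<dots> \<le> mxC D y n i" unfolding mxC_def
    by (rule Max_ge) (simp_all add: Pth_finite Pth_self[OF st n])
  finally show ?thesis .
qed


lemma feas_weaken: "feasible D ig ts x y e u \<Longrightarrow> feasible D False False x y e u"
  unfolding feasible_def by blast

lemma feas_weaken2: "feasible D ig True x y e u \<Longrightarrow> feasible D ig False x y e u"
  unfolding feasible_def by blast

lemma per_range: "scen_tree D \<Longrightarrow> n \<in> nodes D \<Longrightarrow> 1 \<le> per D n \<and> per D n \<le> T D"
  unfolding scen_tree_def by blast

lemma per_root: "scen_tree D \<Longrightarrow> per D (root D) = 1"
  unfolding scen_tree_def by blast

lemma root_in: "scen_tree D \<Longrightarrow> root D \<in> nodes D"
  unfolding scen_tree_def by blast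

lemma Bv_nonneg:
  assumes "cap D t i > 0" "\<forall>j<N D. y i j \<ge> 0"
  shows "Bv D t y i \<ge> 0"
  unfolding Bv_def using assms by (auto intro!: divide_nonneg_nonneg sum_nonneg)

lemma Ch_ne: assumes st: "scen_tree D" and n: "n \<in> nodes D" "n \<notin> Leaves D"
  shows "Ch D n \<noteq> {}"
proof -
  have "per D n \<noteq> T D" using n unfolding Leaves_def Lev_def by auto
  then have "per D n < T D" using per_range[OF st n(1)] by simp
  then show ?thesis using st n(1) unfolding scen_tree_def by blast
qed

lemma TS_feasible:
  assumes v: "valid_inst D" and fL: "feasible D False False xL yL etaL uL"
  shows "feasible D True True (xTS D yL) yL (eta_of D (xTS D yL) yL uL) uL"
proof -
  have st: "scen_tree D" using v unfolding valid_inst_def by blast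
  have capp: "\<And>t i. t \<in> {1..T D} \<Longrightarrow> i < M D \<Longrightarrow> cap D t i > 0" using v unfolding valid_inst_def by blast
  have ynn: "\<And>n i j. n \<in> nodes D \<Longrightarrow> i < M D \<Longrightarrow> j < N D \<Longrightarrow> yL n i j \<ge> 0"
    using fL unfolding feasible_def by blast
  have Bnn: "Bv D (per D n) (yL n) i \<ge> 0" if "n \<in> nodes D" "i < M D" for n i
  proof (rule Bv_nonneg)
    show "cap D (per D n) i > 0" using capp per_range[OF st that(1)] that by auto
    show "\<forall>j<N D. 0 \<le> yL n i j" using ynn that by blast
  qed
  have c1: "\<forall>n\<in>nodes D. \<forall>i<M D. xTS D yL n i \<ge> 0 \<and> (True \<longrightarrow> xTS D yL n i \<in> \<int>)"
  proof (intro ballI allI impI conjI)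
    fix n i assume n: "n \<in> nodes D" and i: "i < M D"
    show "xTS D yL n i \<ge> 0"
    proof (cases "n = root D")
      case True
      have "Bv D (per D n) (yL n) i \<le> real_of_int \<lceil>Bv D (per D n) (yL n) i\<rceil>" by (rule le_of_int_ceiling)
      then show ?thesis using Bnn[OF n i] True by (simp add: xTS_def)
    next
      case False
      then show ?thesis using mxC_mono[OF st n False, of yL i] by (simp add: xTS_def)
    qed
    show "xTS D yL n i \<in> \<int>"
    proof (cases "n = root D")
      case True then show ?thesis by (simp add: xTS_def)
    next
      case False
      have "par D n \<in> nodes D" using nonroot[OF st n False] by blast
      then show ?thesis using False mxC_int[OF st n, of yL i] mxC_int[OF st, of "par D n" yL i]
        by (simp add: xTS_def Ints_diff)
    qed
  qed
  have c2: "\<forall>n\<in>nodes D. \<forall>i<M D. Bv D (per D n) (yL n) i \<le> (\<Sum>m\<in>Pth D n. xTS D yL m i)"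
    using pathsum_TS[OF st] Bv_le_mxC[OF st] by simp
  have c3: "\<forall>n\<in>nodes D - {root D}. uL n + eta_of D (xTS D yL) yL uL (par D n) \<ge> stage_cost D (xTS D yL) yL n"
  proof
    fix n assume n: "n \<in> nodes D - {root D}"
    have "stage_cost D (xTS D yL) yL n - uL n \<le> eta_of D (xTS D yL) yL uL (par D n)"
      unfolding eta_of_def by (rule Max_ge) (use Ch_finite[OF st] in_Ch_par[of n D] n in simp_all)
    then show "uL n + eta_of D (xTS D yL) yL uL (par D n) \<ge> stage_cost D (xTS D yL) yL n" by simp
  qed
  have c4: "\<forall>t\<in>{1..T D}. \<forall>m\<in>Lev D t. \<forall>n\<in>Lev D t. \<forall>i<M D. xTS D yL m i = xTS D yL n i"
  proof (intro ballI allI impI)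
    fix t m n i assume t: "t \<in> {1..T D}" and m: "m \<in> Lev D t" and n: "n \<in> Lev D t" and i: "i < M D"
    show "xTS D yL m i = xTS D yL n i"
    proof (cases "t = 1")
      case True then show ?thesis using m n Lev1[OF st] by simp
    next
      case False
      have mn: "m \<in> nodes D" "per D m = t" "n \<in> nodes D" "per D n = t" using m n by (auto simp: Lev_def)
      have nr: "m \<noteq> root D" "n \<noteq> root D" using mn False per_root[OF st] by auto
      have pm: "par D m \<in> nodes D" "per D (par D m) = t - 1" using nonroot[OF st mn(1) nr(1)] mn by auto
      have pn: "par D n \<in> nodes D" "per D (par D n) = t - 1" using nonroot[OF st mn(3) nr(2)] mn by auto
      show ?thesis using nr unfolding xTS_def
        by (simp add: mxC_per[OF st mn(1)] mxC_per[OF st mn(3)] mxC_per[OF st pm(1)] mxC_per[OF st pn(1)] mn pm pn)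
    qed
  qed
  show ?thesis unfolding feasible_def
    using c1 c2 c3 c4 fL unfolding feasible_def by blast
qed


lemma mxB_le:
  assumes st: "scen_tree D" and fL: "feasible D False False xL yL etaL uL"
    and n: "n \<in> nodes D" and i: "i < M D"
  shows "mxB D yL n i \<le> (\<Sum>m\<in>Pth D n. xL m i)"
  unfolding mxB_def
proof (rule Max.boundedI)
  show "finite ((\<lambda>m. Bv D (per D m) (yL m) i) ` Pth D n)" using Pth_finite[of D n] by simp
  show "(\<lambda>m. Bv D (per D m) (yL m) i) ` Pth D n \<noteq> {}" using Pth_ne[OF st n] by simp
  fix a assume "a \<in> (\<lambda>m. Bv D (per D m) (yL m) i) ` Pth D n"
  then obtain m where m: "m \<in> Pth D n" "a = Bv D (per D m) (yL m) i" by blast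
  have mn: "m \<in> nodes D" using Pth_nodes[OF st n] m(1) by blast
  have "a \<le> (\<Sum>k\<in>Pth D m. xL k i)" using fL mn i m(2) unfolding feasible_def by blast
  also have "\<dots> \<le> (\<Sum>k\<in>Pth D n. xL k i)"
  proof (rule sum_mono2)
    show "finite (Pth D n)" by (rule Pth_finite)
    show "Pth D m \<subseteq> Pth D n" by (rule Pth_mono[OF st n m(1)])
    fix b assume "b \<in> Pth D n - Pth D m"
    then have "b \<in> nodes D" using Pth_nodes[OF st n] by blast
    then show "0 \<le> xL b i" using fL i unfolding feasible_def by blast
  qed
  finally show "a \<le> (\<Sum>k\<in>Pth D n. xL k i)" .
qed

lemma sc_le:
  assumes v: "valid_inst D" and fL: "feasible D False False xL yL etaL uL"
    and n: "n \<in> nodes D"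
  shows "stage_cost D (xMS D yL) yL n \<le> stage_cost D xL yL n"
proof -
  have st: "scen_tree D" using v unfolding valid_inst_def by blast
  have fcn: "\<And>t i. t \<in> {1..T D} \<Longrightarrow> i < M D \<Longrightarrow> fc D t i \<ge> 0" using v unfolding valid_inst_def by blast
  have pr: "per D n \<in> {1..T D}" using per_range[OF st n] by simp
  show ?thesis unfolding stage_cost_def
  proof (rule add_right_mono, rule sum_mono)
    fix i assume i: "i \<in> {..<M D}"
    show "fc D (per D n) i * (\<Sum>m\<in>Pth D n. xMS D yL m i) \<le> fc D (per D n) i * (\<Sum>m\<in>Pth D n. xL m i)"
      using mult_left_mono[OF mxB_le[OF st fL n, of i] fcn[OF pr, of i]] i pathsum_MS[OF st n, of yL i]
      by simp
  qed
qed

lemma eta_le: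
  assumes v: "valid_inst D" and fL: "feasible D False False xL yL etaL uL"
    and n: "n \<in> nodes D" "n \<notin> Leaves D"
  shows "eta_of D (xMS D yL) yL uL n \<le> etaL n"
  unfolding eta_of_def
proof (rule Max.boundedI)
  have st: "scen_tree D" using v unfolding valid_inst_def by blast
  show "finite ((\<lambda>m. stage_cost D (xMS D yL) yL m - uL m) ` Ch D n)" using Ch_finite[OF st] by simp
  show "(\<lambda>m. stage_cost D (xMS D yL) yL m - uL m) ` Ch D n \<noteq> {}" using Ch_ne[OF st n] by simp
  fix a assume "a \<in> (\<lambda>m. stage_cost D (xMS D yL) yL m - uL m) ` Ch D n"
  then obtain m where m: "m \<in> Ch D n" "a = stage_cost D (xMS D yL) yL m - uL m" by blast
  have mm: "m \<in> nodes D" "m \<noteq> root D" "par D m = n" using m(1) unfolding Ch_def by auto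
  have "stage_cost D xL yL m \<le> uL m + etaL (par D m)" using fL mm unfolding feasible_def by blast
  then show "a \<le> etaL n" using sc_le[OF v fL mm(1)] m(2) mm(3) by simp
qed

lemma obj_MS_le:
  assumes v: "valid_inst D" and fL: "feasible D False False xL yL etaL uL"
  shows "obj D (xMS D yL) yL (eta_of D (xMS D yL) yL uL) uL \<le> obj D xL yL etaL uL"
  unfolding obj_def
proof (rule sum_mono)
  have st: "scen_tree D" using v unfolding valid_inst_def by blast
  fix n assume n: "n \<in> nodes D"
  have pp: "prob D n > 0" using v n unfolding valid_inst_def by blast
  have lamr: "\<And>t. t \<in> {2..T D} \<Longrightarrow> 0 \<le> lam D t \<and> lam D t \<le> 1" using v unfolding valid_inst_def by blast
  have w: "wgt D n \<ge> 0"
  proof (cases "n = root D")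
    case False
    have "per D n \<in> {2..T D}" using nonroot[OF st n False] per_range[OF st n] per_range[OF st, of "par D n"] by auto
    then show ?thesis using lamr False unfolding wgt_def by auto
  qed (simp add: wgt_def)
  have l: "lamt D n * eta_of D (xMS D yL) yL uL n \<le> lamt D n * etaL n"
  proof (cases "n \<in> Leaves D")
    case False
    have "per D n \<noteq> T D" using n False unfolding Leaves_def Lev_def by auto
    then have "per D n + 1 \<in> {2..T D}" using per_range[OF st n] by auto
    then have "lamt D n \<ge> 0" using lamr False unfolding lamt_def by auto
    then show ?thesis using eta_le[OF v fL n False] by (rule mult_left_mono[rotated])
  qed (simp add: lamt_def)
  have s: "wgt D n * stage_cost D (xMS D yL) yL n \<le> wgt D n * stage_cost D xL yL n"
    using mult_left_mono[OF sc_le[OF v fL n] w] .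
  show "prob D n * (wgt D n * stage_cost D (xMS D yL) yL n + lamt D n * eta_of D (xMS D yL) yL uL n + alpt D n * uL n)
     \<le> prob D n * (wgt D n * stage_cost D xL yL n + lamt D n * etaL n + alpt D n * uL n)"
    using s l pp by (intro mult_left_mono) auto
qed


lemma obj_diff:
  assumes v: "valid_inst D"
  shows "obj D (xTS D yL) yL (eta_of D (xTS D yL) yL uL) uL - obj D (xMS D yL) yL (eta_of D (xMS D yL) yL uL) uL
         = VMS_UB D yL uL"
proof -
  have st: "scen_tree D" using v unfolding valid_inst_def by blast
  have fin: "finite (nodes D)" by (rule fin_nodes[OF st])
  have rt: "root D \<in> nodes D" by (rule root_in[OF st])
  have p1: "prob D (root D) = 1"
  proof -
    have "T D \<ge> 2" using v unfolding valid_inst_def by blast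
    then have "(\<Sum>n\<in>Lev D 1. prob D n) = 1" using v unfolding valid_inst_def by auto
    then show ?thesis using Lev1[OF st] by simp
  qed
  define eT where "eT = eta_of D (xTS D yL) yL uL"
  define eM where "eM = eta_of D (xMS D yL) yL uL"
  define dC where "dC n = (\<Sum>i<M D. fc D (per D n) i * (mxC D yL n i - mxB D yL n i))" for n
  have scd: "stage_cost D (xTS D yL) yL n - stage_cost D (xMS D yL) yL n = dC n" if n: "n \<in> nodes D" for n
  proof -
    have "stage_cost D (xTS D yL) yL n - stage_cost D (xMS D yL) yL n
        = (\<Sum>i<M D. fc D (per D n) i * mxC D yL n i) - (\<Sum>i<M D. fc D (per D n) i * mxB D yL n i)"
      unfolding stage_cost_def pathsum_TS[OF st n] pathsum_MS[OF st n] by simp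
    also have "\<dots> = dC n" unfolding dC_def by (simp add: sum_subtractf[symmetric] right_diff_distrib)
    finally show ?thesis .
  qed
  define A where "A n = prob D n * wgt D n * dC n" for n
  define B where "B n = prob D n * lamt D n * (eT n - eM n)" for n
  have "obj D (xTS D yL) yL eT uL - obj D (xMS D yL) yL eM uL
      = (\<Sum>n\<in>nodes D. prob D n * (wgt D n * stage_cost D (xTS D yL) yL n + lamt D n * eT n + alpt D n * uL n)
           - prob D n * (wgt D n * stage_cost D (xMS D yL) yL n + lamt D n * eM n + alpt D n * uL n))"
    unfolding obj_def by (rule sum_subtractf[symmetric])
  also have "\<dots> = (\<Sum>n\<in>nodes D. A n + B n)"
  proof (rule sum.cong[OF refl])
    fix n assume n: "n \<in> nodes D"
    show "prob D n * (wgt D n * stage_cost D (xTS D yL) yL n + lamt D n * eT n + alpt D n * uL n)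
           - prob D n * (wgt D n * stage_cost D (xMS D yL) yL n + lamt D n * eM n + alpt D n * uL n) = A n + B n"
      unfolding A_def B_def scd[OF n, symmetric] by (simp add: algebra_simps)
  qed
  also have "\<dots> = sum A (nodes D) + sum B (nodes D)" by (rule sum.distrib)
  also have "sum A (nodes D) = A (root D) + sum A (nodes D - {root D})" by (rule sum.remove[OF fin rt])
  also have "A (root D) = (\<Sum>i<M D. fc D (per D (root D)) i *
        (real_of_int \<lceil>Bv D (per D (root D)) (yL (root D)) i\<rceil> - Bv D (per D (root D)) (yL (root D)) i))"
    unfolding A_def dC_def mxC_root[OF st] mxB_root[OF st] p1 by (simp add: wgt_def)
  also have "sum A (nodes D - {root D}) = (\<Sum>n\<in>nodes D - {root D}. prob D n * (1 - lam D (per D n)) *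
        (\<Sum>i<M D. fc D (per D n) i * (mxC D yL n i - mxB D yL n i)))"
    by (rule sum.cong[OF refl]) (simp add: A_def dC_def wgt_def)
  also have "sum B (nodes D) = (\<Sum>n\<in>nodes D - Leaves D. prob D n * lam D (per D n + 1) * (eT n - eM n))"
    by (rule sum.mono_neutral_cong_right[OF fin]) (auto simp: B_def lamt_def)
  finally show ?thesis unfolding VMS_UB_def eT_def eM_def by simp
qed

theorem theorem2:
  fixes D :: "'v inst"
    and xL :: "'v \<Rightarrow> nat \<Rightarrow> real" and yL :: "'v \<Rightarrow> nat \<Rightarrow> nat \<Rightarrow> real"
    and etaL uL :: "'v \<Rightarrow> real"
  assumes "valid_inst D"
    and "feasible D False False xL yL etaL uL"
    and "\<forall>x y eta u. feasible D False False x y eta u \<longrightarrow> obj D xL yL etaL uL \<le> obj D x y eta u"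
  shows "VMS D \<le> VMS_UB D yL uL"
proof -
  note v = assms(1) and fL = assms(2) and opt = assms(3)
  define oT where "oT = obj D (xTS D yL) yL (eta_of D (xTS D yL) yL uL) uL"
  define oM where "oM = obj D (xMS D yL) yL (eta_of D (xMS D yL) yL uL) uL"
  have fT: "feasible D True True (xTS D yL) yL (eta_of D (xTS D yL) yL uL) uL"
    by (rule TS_feasible[OF v fL])
  have lb: "obj D xL yL etaL uL \<le> obj D x y e u" if "feasible D ig ts x y e u" for ig ts x y e u
    using opt feas_weaken[OF that] by blast
  have zM: "obj D xL yL etaL uL \<le> zMS D" unfolding zMS_def
  proof (rule cInf_greatest)
    show "{obj D x y eta u |x y eta u. feasible D True False x y eta u} \<noteq> {}"
      using feas_weaken2[OF fT] by blast
    fix z assume "z \<in> {obj D x y eta u |x y eta u. feasible D True False x y eta u}"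
    then show "obj D xL yL etaL uL \<le> z" using lb by blast
  qed
  have zT: "zTS D \<le> oT" unfolding zTS_def oT_def
  proof (rule cInf_lower)
    show "obj D (xTS D yL) yL (eta_of D (xTS D yL) yL uL) uL \<in> {obj D x y eta u |x y eta u. feasible D True True x y eta u}"
      using fT by blast
    show "bdd_below {obj D x y eta u |x y eta u. feasible D True True x y eta u}"
      by (rule bdd_belowI[of _ "obj D xL yL etaL uL"]) (use lb in blast)
  qed
  have "oM \<le> obj D xL yL etaL uL" unfolding oM_def by (rule obj_MS_le[OF v fL])
  moreover have "oT - oM = VMS_UB D yL uL" unfolding oT_def oM_def by (rule obj_diff[OF v])
  ultimately show ?thesis unfolding VMS_def using zM zT by linarith
qed

end
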